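(* Let $h,m$ be positive integers. Every $\mathrm{CC}^h[m]$-circuit $\Gamma$ computing a non-constant Boolean function has balance at least $2^{1-\gamma_{h,m}^{-1}(|\Gamma|)}$.
   Context: For an integer $m\ge 1$ and $A\subseteq\{0,\dots,m-1\}$, a gate $\mathrm{MOD}_m^A$ takes finitely many Boolean inputs (counted with multiplicity) and outputs $1$ if their sum modulo $m$ lies in $A$, and $0$ otherwise. A $\mathrm{CC}^h[m]$-circuit is a depth-$h$ Boolean circuit all of whose gates are of the form $\mathrm{MOD}_m^A$ ($A$ may vary between gates), with Boolean variable inputs (constants allowed) and multiple wires allowed. $|\Gamma|$ is the number of gates of $\Gamma$. $\gamma_{h,m}(n)$ is the size of the smallest $\mathrm{CC}^h[m]$-circuit computing the $n$-ary conjunction $\mathrm{AND}_n$ (partial function), and $\gamma_{h,m}^{-1}(k)$ is the largest $n$ with $\gamma_{h,m}(n)\le k$. The balance of an $n$-ary Boolean function $f$ is $1-\frac{\big||f^{-1}(0)|-|f^{-1}(1)|\big|}{2^n}$. *)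

theory Defs
  imports Complex_Main "HOL-Library.Multiset"
begin

text \<open>A wire entering a gate: an input variable (by index), a Boolean constant,
  or the output of an earlier gate (by index in the gate list).\<close>
datatype wire = Var nat | Const bool | Gate nat

text \<open>A MOD_m^A gate: the accepting set A and the multiset of its input wires
  (multiple wires allowed).\<close>
type_synonym gate = "nat set \<times> wire multiset"

text \<open>A circuit is a nonempty list of gates in topological order; its output is the last gate.
  The size is the number of gates.\<close>
type_synonym circuit = "gate list"

definition wire_val :: "bool list \<Rightarrow> bool list \<Rightarrow> wire \<Rightarrow> bool" where
  "wire_val x vs w = (case w of Var k \<Rightarrow> x ! k | Const b \<Rightarrow> b | Gate j \<Rightarrow> vs ! j)"

definition gate_val :: "nat \<Rightarrow> bool list \<Rightarrow> bool list \<Rightarrow> gate \<Rightarrow> bool" where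
  "gate_val m x vs g = ((\<Sum>w\<in>#snd g. (if wire_val x vs w then 1 else 0::nat)) mod m \<in> fst g)"

definition gate_vals :: "nat \<Rightarrow> bool list \<Rightarrow> gate list \<Rightarrow> bool list" where
  "gate_vals m x gs = foldl (\<lambda>vs g. vs @ [gate_val m x vs g]) [] gs"

definition circuit_eval :: "nat \<Rightarrow> circuit \<Rightarrow> bool list \<Rightarrow> bool" where
  "circuit_eval m \<Gamma> x = last (gate_vals m x \<Gamma>)"

definition wire_depth :: "nat list \<Rightarrow> wire \<Rightarrow> nat" where
  "wire_depth ds w = (case w of Gate j \<Rightarrow> ds ! j | _ \<Rightarrow> 0)"

definition gate_depths :: "gate list \<Rightarrow> nat list" where
  "gate_depths gs = foldl (\<lambda>ds g. ds @ [1 + Max (insert 0 (wire_depth ds ` set_mset (snd g)))]) [] gs"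

definition circuit_depth :: "circuit \<Rightarrow> nat" where
  "circuit_depth \<Gamma> = Max (insert 0 (set (gate_depths \<Gamma>)))"

definition wf_circuit :: "nat \<Rightarrow> nat \<Rightarrow> circuit \<Rightarrow> bool" where
  "wf_circuit m n \<Gamma> \<longleftrightarrow> \<Gamma> \<noteq> [] \<and>
     (\<forall>i < length \<Gamma>. fst (\<Gamma> ! i) \<subseteq> {0..<m} \<and>
        (\<forall>w\<in>#snd (\<Gamma> ! i). (\<forall>k. w = Var k \<longrightarrow> k < n) \<and> (\<forall>j. w = Gate j \<longrightarrow> j < i)))"

definition CC_circuit :: "nat \<Rightarrow> nat \<Rightarrow> nat \<Rightarrow> circuit \<Rightarrow> bool" where
  "CC_circuit h m n \<Gamma> \<longleftrightarrow> wf_circuit m n \<Gamma> \<and> circuit_depth \<Gamma> \<le> h"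

definition computes :: "nat \<Rightarrow> nat \<Rightarrow> circuit \<Rightarrow> (bool list \<Rightarrow> bool) \<Rightarrow> bool" where
  "computes m n \<Gamma> f \<longleftrightarrow> (\<forall>x. length x = n \<longrightarrow> circuit_eval m \<Gamma> x = f x)"

definition AND_fun :: "bool list \<Rightarrow> bool" where
  "AND_fun x = (\<forall>b\<in>set x. b)"

definition AND_computable :: "nat \<Rightarrow> nat \<Rightarrow> nat \<Rightarrow> bool" where
  "AND_computable h m n \<longleftrightarrow> (\<exists>\<Gamma>. CC_circuit h m n \<Gamma> \<and> computes m n \<Gamma> AND_fun)"

text \<open>gamma h m n (meaningful only when AND_computable h m n): smallest size.\<close>
definition gamma :: "nat \<Rightarrow> nat \<Rightarrow> nat \<Rightarrow> nat" where
  "gamma h m n = (LEAST k. \<exists>\<Gamma>. CC_circuit h m n \<Gamma> \<and> computes m n \<Gamma> AND_fun \<and> length \<Gamma> = k)"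

definition gamma_inv :: "nat \<Rightarrow> nat \<Rightarrow> nat \<Rightarrow> nat" where
  "gamma_inv h m k = (GREATEST n. AND_computable h m n \<and> gamma h m n \<le> k)"

definition nonconstant :: "nat \<Rightarrow> (bool list \<Rightarrow> bool) \<Rightarrow> bool" where
  "nonconstant n f \<longleftrightarrow> (\<exists>x y. length x = n \<and> length y = n \<and> f x \<noteq> f y)"

definition balance :: "nat \<Rightarrow> (bool list \<Rightarrow> bool) \<Rightarrow> real" where
  "balance n f = 1 - \<bar>real (card {x. length x = n \<and> \<not> f x}) - real (card {x. length x = n \<and> f x})\<bar> / 2 ^ n"

end

theory Submission
  imports Defs
begin


datatype lit = LConst bool | LPos nat | LNeg nat

fun evallit :: "bool list \<Rightarrow> lit \<Rightarrow> bool" where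
  "evallit y (LConst b) = b" | "evallit y (LPos j) = y ! j" | "evallit y (LNeg j) = (\<not> y ! j)"

fun litok :: "nat \<Rightarrow> lit \<Rightarrow> bool" where
  "litok k (LConst b) = True" | "litok k (LPos j) = (j < k)" | "litok k (LNeg j) = (j < k)"

fun shiftlit :: "lit \<Rightarrow> lit" where
  "shiftlit (LConst b) = LConst b" | "shiftlit (LPos j) = LPos (Suc j)" | "shiftlit (LNeg j) = LNeg (Suc j)"

lemma evallit_shift[simp]: "evallit (a # y) (shiftlit l) = evallit y l"
  by (cases l) auto

lemma litok_shift[simp]: "litok (Suc k) (shiftlit l) = litok k l"
  by (cases l) auto

lemma fin_len: "finite {xs::bool list. length xs = n}"
proof -
  have "{xs::bool list. length xs = n} = {xs. set xs \<subseteq> UNIV \<and> length xs = n}" by simp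
  then show ?thesis using finite_lists_length_eq[of "UNIV::bool set" n] by simp
qed

lemma card_len: "card {xs::bool list. length xs = n} = 2 ^ n"
proof -
  have "{xs::bool list. length xs = n} = {xs. set xs \<subseteq> UNIV \<and> length xs = n}" by simp
  then show ?thesis using card_lists_length_eq[of "UNIV::bool set" n] by simp
qed

lemma fin_lenP: "finite {xs::bool list. length xs = n \<and> P xs}"
  by (rule rev_finite_subset[OF fin_len[of n]]) auto

lemma card_split: "card {x. length x = Suc n \<and> f x} =
   card {xs. length xs = n \<and> f (False#xs)} + card {xs. length xs = n \<and> f (True#xs)}"
proof -
  have e: "{x. length x = Suc n \<and> f x} = Cons False ` {xs. length xs = n \<and> f (False#xs)} \<union> Cons True ` {xs. length xs = n \<and> f (True#xs)}"
  proof (intro equalityI subsetI)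
    fix x assume "x \<in> {x. length x = Suc n \<and> f x}"
    then obtain b xs where "x = b # xs" "length xs = n" "f (b # xs)" by (cases x) auto
    then show "x \<in> Cons False ` {xs. length xs = n \<and> f (False#xs)} \<union> Cons True ` {xs. length xs = n \<and> f (True#xs)}"
      by (cases b) auto
  qed auto
  have d: "Cons False ` {xs. length xs = n \<and> f (False#xs)} \<inter> Cons True ` {xs. length xs = n \<and> f (True#xs)} = {}"
    by auto
  show ?thesis unfolding e
    by (subst card_Un_disjoint[OF _ _ d]) (simp_all add: fin_lenP card_image)
qed

lemma AND_Cons[simp]: "AND_fun (a # y) = (a \<and> AND_fun y)"
  by (simp add: AND_fun_def)

lemma comb:
  "{x. length x = n \<and> f x} \<noteq> {} \<Longrightarrow> card {x. length x = n \<and> f x} < 2^(n+1-k) \<Longrightarrow>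
   \<exists>ls. length ls = n \<and> (\<forall>l\<in>set ls. litok k l) \<and> (\<forall>y. length y = k \<longrightarrow> f (map (evallit y) ls) = AND_fun y)"
proof (induction n arbitrary: f k)
  case 0
  then have "f []" by auto
  moreover have "k = 0" using 0 by (cases k) (auto simp: card_gt_0_iff fin_lenP)
  ultimately show ?case by (auto simp: AND_fun_def)
next
  case (Suc n)
  define c0 where "c0 = card {xs. length xs = n \<and> f (False#xs)}"
  define c1 where "c1 = card {xs. length xs = n \<and> f (True#xs)}"
  have cs: "card {x. length x = Suc n \<and> f x} = c0 + c1" unfolding c0_def c1_def by (rule card_split)
  have cpos: "c0 + c1 > 0" using Suc.prems(1) cs by (metis card_gt_0_iff fin_lenP)
  show ?case
  proof (cases k)
    case 0
    from Suc.prems(1) obtain x where x: "length x = Suc n" "f x" by auto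
    show ?thesis using x 0 by (intro exI[of _ "map LConst x"]) (auto simp: AND_fun_def comp_def map_idI)
  next
    case (Suc k')
    show ?thesis
    proof (cases "c0 = 0")
      case True
      then have z: "\<And>z. length z = n \<Longrightarrow> \<not> f (False # z)" unfolding c0_def using fin_lenP by auto
      have "{xs. length xs = n \<and> f (True#xs)} \<noteq> {}" using True cpos c1_def by (metis add_0 card.empty less_irrefl)
      moreover have "c1 < 2^(n+1-k')" using Suc.prems(2) cs True Suc by simp
      ultimately obtain ls where ls: "length ls = n" "\<forall>l\<in>set ls. litok k' l"
        "\<forall>y. length y = k' \<longrightarrow> f (True # map (evallit y) ls) = AND_fun y"
        using Suc.IH[of "\<lambda>xs. f (True#xs)" k'] c1_def by auto
      show ?thesis
      proof (intro exI[of _ "LPos 0 # map shiftlit ls"] conjI allI impI)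
        fix y :: "bool list" assume "length y = k"
        then obtain a y' where y: "y = a # y'" "length y' = k'" using Suc by (cases y) auto
        show "f (map (evallit y) (LPos 0 # map shiftlit ls)) = AND_fun y"
          using ls z[of "map (evallit y') ls"] y by (cases a) (auto simp: comp_def)
      next
        show "\<forall>l\<in>set (LPos 0 # map shiftlit ls). litok k l" using ls Suc by auto
      qed (use ls in simp)
    next
      case c0: False
      show ?thesis
      proof (cases "c1 = 0")
        case True
        then have z: "\<And>z. length z = n \<Longrightarrow> \<not> f (True # z)" unfolding c1_def using fin_lenP by auto
        have "{xs. length xs = n \<and> f (False#xs)} \<noteq> {}" using True cpos c0_def by (metis add_0_right card.empty less_irrefl)
        moreover have "c0 < 2^(n+1-k')" using Suc.prems(2) cs True Suc by simp
        ultimately obtain ls where ls: "length ls = n" "\<forall>l\<in>set ls. litok k' l"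
          "\<forall>y. length y = k' \<longrightarrow> f (False # map (evallit y) ls) = AND_fun y"
          using Suc.IH[of "\<lambda>xs. f (False#xs)" k'] c0_def by auto
        show ?thesis
        proof (intro exI[of _ "LNeg 0 # map shiftlit ls"] conjI allI impI)
          fix y :: "bool list" assume "length y = k"
          then obtain a y' where y: "y = a # y'" "length y' = k'" using Suc by (cases y) auto
          show "f (map (evallit y) (LNeg 0 # map shiftlit ls)) = AND_fun y"
            using ls z[of "map (evallit y') ls"] y by (cases a) (auto simp: comp_def)
        next
          show "\<forall>l\<in>set (LNeg 0 # map shiftlit ls). litok k l" using ls Suc by auto
        qed (use ls in simp)
      next
        case c1: False
        have lt: "c0 + c1 < 2^(n+1-k')" using Suc.prems(2) cs Suc by simp
        have "k' \<le> n"
        proof (rule ccontr)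
          assume "\<not> k' \<le> n" then have "n + 1 - k' = 0" by simp
          then show False using lt c0 c1 by simp
        qed
        then have e: "(2::nat)^(n+1-k') = 2 * 2^(n + 1 - k)" using Suc by (simp add: Suc_diff_le)
        have "\<exists>b. card {xs. length xs = n \<and> f (b#xs)} \<noteq> 0 \<and> card {xs. length xs = n \<and> f (b#xs)} < 2^(n + 1 - k)"
        proof (cases "c0 \<le> c1")
          case True
          have "c0 < 2^(n+1-k)" using True lt e by linarith
          then show ?thesis using c0 unfolding c0_def by (intro exI[of _ False] conjI)
        next
          case False
          have "c1 < 2^(n+1-k)" using False lt e by linarith
          then show ?thesis using c1 unfolding c1_def by (intro exI[of _ True] conjI)
        qed
        then obtain b where b: "card {xs. length xs = n \<and> f (b#xs)} \<noteq> 0"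
            "card {xs. length xs = n \<and> f (b#xs)} < 2^(n + 1 - k)" using Suc by auto
        have "{xs. length xs = n \<and> f (b#xs)} \<noteq> {}" using b(1) by (metis card.empty)
        then obtain ls where ls: "length ls = n" "\<forall>l\<in>set ls. litok k l"
          "\<forall>y. length y = k \<longrightarrow> f (b # map (evallit y) ls) = AND_fun y"
          using Suc.IH[of "\<lambda>xs. f (b#xs)" k] b by auto
        show ?thesis using ls by (intro exI[of _ "LConst b # ls"]) (simp add: comp_def)
      qed
    qed
  qed
qed



definition twire :: "nat \<Rightarrow> lit list \<Rightarrow> wire \<Rightarrow> wire multiset" where
  "twire m ls w = (case w of Var i \<Rightarrow> (case ls ! i of LConst b \<Rightarrow> {#Const b#} | LPos j \<Rightarrow> {#Var j#}
      | LNeg j \<Rightarrow> add_mset (Const True) (replicate_mset (m - 1) (Var j))) | _ \<Rightarrow> {#w#})"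

definition tms :: "nat \<Rightarrow> lit list \<Rightarrow> wire multiset \<Rightarrow> wire multiset" where
  "tms m ls M = sum_mset (image_mset (twire m ls) M)"

definition tgate :: "nat \<Rightarrow> lit list \<Rightarrow> bool \<Rightarrow> gate \<Rightarrow> gate" where
  "tgate m ls b g = (if b then {0..<m} - fst g else fst g, tms m ls (snd g))"

definition bv :: "bool list \<Rightarrow> bool list \<Rightarrow> wire \<Rightarrow> nat" where
  "bv x vs w = (if wire_val x vs w then 1 else 0)"

lemma gate_vals_snoc: "gate_vals m x (gs @ [g]) = gate_vals m x gs @ [gate_val m x (gate_vals m x gs) g]"
  by (simp add: gate_vals_def)

lemma gate_depths_snoc: "gate_depths (gs @ [g]) = gate_depths gs @ [1 + Max (insert 0 (wire_depth (gate_depths gs) ` set_mset (snd g)))]"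
  by (simp add: gate_depths_def)

lemma tms_add[simp]: "tms m ls (add_mset w M) = twire m ls w + tms m ls M"
  by (simp add: tms_def)

lemma tms_empty[simp]: "tms m ls {#} = {#}"
  by (simp add: tms_def)

lemma twire_val:
  assumes "m > 0" "\<And>i. w = Var i \<Longrightarrow> i < length ls"
  shows "(\<Sum>u\<in>#twire m ls w. bv y vs u) mod m = bv (map (evallit y) ls) vs w mod m"
proof (cases w)
  case (Var i)
  then have i: "i < length ls" using assms by auto
  show ?thesis
  proof (cases "ls ! i")
    case (LNeg j)
    have "(\<Sum>u\<in>#twire m ls w. bv y vs u) = 1 + (m - 1) * (if y ! j then 1 else 0)"
      using Var LNeg by (simp add: twire_def bv_def wire_val_def)
    then show ?thesis using Var LNeg i assms(1) by (auto simp: bv_def wire_val_def)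
  qed (use Var i in \<open>auto simp: twire_def bv_def wire_val_def\<close>)
qed (auto simp: twire_def bv_def wire_val_def)

lemma tms_val:
  assumes "m > 0" "\<forall>w\<in>#M. \<forall>i. w = Var i \<longrightarrow> i < length ls"
  shows "(\<Sum>u\<in>#tms m ls M. bv y vs u) mod m = (\<Sum>w\<in>#M. bv (map (evallit y) ls) vs w) mod m"
  using assms(2)
proof (induction M)
  case empty then show ?case by simp
next
  case (add w M)
  have "(\<Sum>u\<in>#tms m ls (add_mset w M). bv y vs u) = (\<Sum>u\<in>#twire m ls w. bv y vs u) + (\<Sum>u\<in>#tms m ls M. bv y vs u)"
    by simp
  also have "\<dots> mod m = (bv (map (evallit y) ls) vs w + (\<Sum>w\<in>#M. bv (map (evallit y) ls) vs w)) mod m"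
    using twire_val[OF assms(1), of w ls y vs] add by (intro mod_add_cong) auto
  finally show ?case by simp
qed

lemma gate_val_tgate:
  assumes "m > 0" "\<forall>w\<in>#snd g. \<forall>i. w = Var i \<longrightarrow> i < length ls"
  shows "gate_val m y vs (tgate m ls b g) = (b \<noteq> gate_val m (map (evallit y) ls) vs g)"
proof -
  have "(\<Sum>u\<in>#tms m ls (snd g). bv y vs u) mod m = (\<Sum>w\<in>#snd g. bv (map (evallit y) ls) vs w) mod m"
    by (rule tms_val[OF assms])
  then show ?thesis using assms(1)
    by (auto simp: gate_val_def tgate_def bv_def)
qed

lemma vals_tgate:
  assumes "m > 0" "\<forall>g\<in>set gs. \<forall>w\<in>#snd g. \<forall>i. w = Var i \<longrightarrow> i < length ls"
  shows "gate_vals m y (map (tgate m ls False) gs) = gate_vals m (map (evallit y) ls) gs"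
  using assms(2)
proof (induction gs rule: rev_induct)
  case Nil then show ?case by (simp add: gate_vals_def)
next
  case (snoc g gs)
  then show ?case using gate_val_tgate[OF assms(1), of g ls y _ False]
    by (simp add: gate_vals_snoc)
qed

lemma set_tms: "set_mset (tms m ls M) = (\<Union>w\<in>set_mset M. set_mset (twire m ls w))"
  by (induction M) auto

lemma depth_tms: "insert 0 (wire_depth ds ` set_mset (tms m ls M)) = insert 0 (wire_depth ds ` set_mset M)"
proof -
  have a: "wire_depth ds u = 0 \<or> u = w" if "u \<in># twire m ls w" for u w
    using that by (cases w) (auto simp: twire_def wire_depth_def split: lit.splits if_splits)
  have b: "w \<in># twire m ls w \<or> wire_depth ds w = 0" for w
    by (cases w) (auto simp: twire_def wire_depth_def)
  show ?thesis unfolding set_tms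
    using a b by fastforce
qed

lemma depths_tgate: "gate_depths (map (tgate m ls b) gs) = gate_depths gs"
proof (induction gs rule: rev_induct)
  case Nil then show ?case by (simp add: gate_depths_def)
next
  case (snoc g gs)
  then show ?case by (simp add: gate_depths_snoc tgate_def depth_tms)
qed



lemma tgate_nth:
  assumes "\<Gamma> \<noteq> []" "i < length \<Gamma>"
  shows "(map (tgate m ls False) (butlast \<Gamma>) @ [tgate m ls neg (last \<Gamma>)]) ! i = tgate m ls (neg \<and> i = length \<Gamma> - 1) (\<Gamma> ! i)"
proof (cases "i < length \<Gamma> - 1")
  case True then show ?thesis using assms by (simp add: nth_append nth_butlast)
next
  case False
  then have "i = length \<Gamma> - 1" using assms by simp
  then show ?thesis using assms by (simp add: nth_append last_conv_nth)
qed

lemma wf_tgate: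
  assumes "fst g \<subseteq> {0..<m}" "\<forall>w\<in>#snd g. (\<forall>k. w = Var k \<longrightarrow> k < length ls) \<and> (\<forall>j. w = Gate j \<longrightarrow> j < i)"
    and ok: "\<forall>l\<in>set ls. litok k l"
  shows "fst (tgate m ls b g) \<subseteq> {0..<m} \<and>
     (\<forall>w\<in>#snd (tgate m ls b g). (\<forall>k'. w = Var k' \<longrightarrow> k' < k) \<and> (\<forall>j. w = Gate j \<longrightarrow> j < i))"
proof (rule conjI)
  show "fst (tgate m ls b g) \<subseteq> {0..<m}" using assms(1) by (auto simp: tgate_def)
next
  show "\<forall>w\<in>#snd (tgate m ls b g). (\<forall>k'. w = Var k' \<longrightarrow> k' < k) \<and> (\<forall>j. w = Gate j \<longrightarrow> j < i)"
  proof (rule ballI)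
  fix w assume "w \<in># snd (tgate m ls b g)"
  then obtain w0 where w0: "w0 \<in># snd g" "w \<in># twire m ls w0" by (auto simp: tgate_def set_tms)
  show "(\<forall>k'. w = Var k' \<longrightarrow> k' < k) \<and> (\<forall>j. w = Gate j \<longrightarrow> j < i)"
  proof (cases w0)
    case (Var i0)
    then have "i0 < length ls" using assms(2) w0(1) by auto
    then have "litok k (ls ! i0)" using ok by auto
    then show ?thesis using w0(2) Var by (cases "ls ! i0") (auto simp: twire_def split: if_splits)
  next
    case (Const b) then show ?thesis using w0(2) by (auto simp: twire_def)
  next
    case (Gate j) then show ?thesis using w0 assms(2) by (auto simp: twire_def)
  qed
  qed
qed

lemma construct:
  assumes m: "m > 0" and cc: "CC_circuit h m n \<Gamma>" and len: "length ls = n" and ok: "\<forall>l\<in>set ls. litok k l"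
  shows "\<exists>\<Gamma>'. CC_circuit h m k \<Gamma>' \<and> length \<Gamma>' = length \<Gamma> \<and>
     (\<forall>y. circuit_eval m \<Gamma>' y = (neg \<noteq> circuit_eval m \<Gamma> (map (evallit y) ls)))"
proof -
  have ne: "\<Gamma> \<noteq> []" using cc by (simp add: CC_circuit_def wf_circuit_def)
  have wfi: "\<And>i. i < length \<Gamma> \<Longrightarrow> fst (\<Gamma> ! i) \<subseteq> {0..<m} \<and>
        (\<forall>w\<in>#snd (\<Gamma> ! i). (\<forall>k. w = Var k \<longrightarrow> k < length ls) \<and> (\<forall>j. w = Gate j \<longrightarrow> j < i))"
    using cc len by (simp add: CC_circuit_def wf_circuit_def)
  have vars: "\<forall>g\<in>set \<Gamma>. \<forall>w\<in>#snd g. \<forall>i. w = Var i \<longrightarrow> i < length ls"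
  proof (rule ballI)
    fix g assume "g \<in> set \<Gamma>"
    then obtain i where "i < length \<Gamma>" "g = \<Gamma> ! i" by (auto simp: in_set_conv_nth)
    then show "\<forall>w\<in>#snd g. \<forall>i. w = Var i \<longrightarrow> i < length ls" using wfi by blast
  qed
  define G where "G = map (tgate m ls False) (butlast \<Gamma>) @ [tgate m ls neg (last \<Gamma>)]"
  have GG: "butlast \<Gamma> @ [last \<Gamma>] = \<Gamma>" using ne by simp
  have lenG: "length G = length \<Gamma>" using ne by (simp add: G_def)
  have v1: "\<forall>g\<in>set (butlast \<Gamma>). \<forall>w\<in>#snd g. \<forall>i. w = Var i \<longrightarrow> i < length ls"
    using vars by (meson in_set_butlastD)
  have v2: "\<forall>w\<in>#snd (last \<Gamma>). \<forall>i. w = Var i \<longrightarrow> i < length ls"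
    using vars ne last_in_set by blast
  have ceq: "circuit_eval m \<Gamma> x = gate_val m x (gate_vals m x (butlast \<Gamma>)) (last \<Gamma>)" for x
    using arg_cong[OF GG, of "\<lambda>G. circuit_eval m G x"] by (simp add: circuit_eval_def gate_vals_snoc)
  have eval: "circuit_eval m G y = (neg \<noteq> circuit_eval m \<Gamma> (map (evallit y) ls))" for y
  proof -
    have "circuit_eval m G y = gate_val m y (gate_vals m y (map (tgate m ls False) (butlast \<Gamma>))) (tgate m ls neg (last \<Gamma>))"
      by (simp add: G_def circuit_eval_def gate_vals_snoc)
    also have "\<dots> = gate_val m y (gate_vals m (map (evallit y) ls) (butlast \<Gamma>)) (tgate m ls neg (last \<Gamma>))"
      by (simp only: vals_tgate[OF m v1])
    also have "\<dots> = (neg \<noteq> gate_val m (map (evallit y) ls) (gate_vals m (map (evallit y) ls) (butlast \<Gamma>)) (last \<Gamma>))"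
      by (rule gate_val_tgate[OF m v2])
    also have "\<dots> = (neg \<noteq> circuit_eval m \<Gamma> (map (evallit y) ls))"
      by (simp only: ceq)
    finally show ?thesis .
  qed
  have dG: "gate_depths G = gate_depths \<Gamma>"
    using arg_cong[OF GG, of gate_depths]
    by (simp add: G_def gate_depths_snoc depths_tgate tgate_def depth_tms)
  have wfG: "wf_circuit m k G"
  proof -
    have "fst (G ! i) \<subseteq> {0..<m} \<and>
         (\<forall>w\<in>#snd (G ! i). (\<forall>ka. w = Var ka \<longrightarrow> ka < k) \<and> (\<forall>j. w = Gate j \<longrightarrow> j < i))"
      if i: "i < length G" for i
    proof -
      have i': "i < length \<Gamma>" using i lenG by simp
      have e: "G ! i = tgate m ls (neg \<and> i = length \<Gamma> - 1) (\<Gamma> ! i)"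
        unfolding G_def by (rule tgate_nth[OF ne i'])
      have a: "fst (\<Gamma> ! i) \<subseteq> {0..<m}" using wfi[OF i'] by (rule conjunct1)
      have b: "\<forall>w\<in>#snd (\<Gamma> ! i). (\<forall>k. w = Var k \<longrightarrow> k < length ls) \<and> (\<forall>j. w = Gate j \<longrightarrow> j < i)"
        using wfi[OF i'] by (rule conjunct2)
      show ?thesis unfolding e by (rule wf_tgate[OF a b ok])
    qed
    moreover have "G \<noteq> []" by (simp add: G_def)
    ultimately show ?thesis unfolding wf_circuit_def by blast
  qed
  have "CC_circuit h m k G"
    using cc wfG dG by (simp add: CC_circuit_def circuit_depth_def)
  then show ?thesis using lenG eval by blast
qed



lemma modcancel: "(a + b) mod m = (a' + c) mod m \<Longrightarrow> a mod m = a' mod m \<Longrightarrow> b mod m = (c::nat) mod m"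
proof -
  assume h1: "(a + b) mod m = (a' + c) mod m" and h2: "a mod m = a' mod m"
  obtain q1 q2 where e1: "a + b + m*q1 = a' + c + m*q2" using h1 nat_mod_eq_iff by blast
  obtain r1 r2 where e2: "a + m*r1 = a' + m*r2" using h2 nat_mod_eq_iff by blast
  have "b + m*(q1+r2) = c + m*(q2+r1)" using e1 e2 by (simp add: distrib_left)
  then show ?thesis using nat_mod_eq_iff by blast
qed

definition vb :: "bool list \<Rightarrow> wire \<Rightarrow> nat" where
  "vb x w = (case w of Var k \<Rightarrow> if x ! k then 1 else 0 | _ \<Rightarrow> 0)"

definition rest :: "bool list \<Rightarrow> wire \<Rightarrow> nat" where
  "rest vs w = (case w of Var k \<Rightarrow> 0 | Const b \<Rightarrow> if b then 1 else 0 | Gate j \<Rightarrow> if vs ! j then 1 else 0)"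

definition Vg :: "nat \<Rightarrow> bool list \<Rightarrow> gate \<Rightarrow> nat" where
  "Vg m x g = (\<Sum>w\<in>#snd g. vb x w) mod m"

lemma sum_split: "(\<Sum>w\<in>#M. (if wire_val x vs w then 1 else 0::nat)) = (\<Sum>w\<in>#M. vb x w) + (\<Sum>w\<in>#M. rest vs w)"
proof (induction M)
  case empty then show ?case by simp
next
  case (add w M)
  have "(if wire_val x vs w then 1 else 0::nat) = vb x w + rest vs w"
    by (cases w) (auto simp: vb_def rest_def wire_val_def)
  then show ?case using add by simp
qed

lemma gate_val_V: "Vg m x g = Vg m x' g \<Longrightarrow> gate_val m x vs g = gate_val m x' vs g"
  unfolding gate_val_def sum_split Vg_def
  by (metis mod_add_cong)

lemma vals_V: "\<forall>g\<in>set gs. Vg m x g = Vg m x' g \<Longrightarrow> gate_vals m x gs = gate_vals m x' gs"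
proof (induction gs rule: rev_induct)
  case Nil then show ?case by (simp add: gate_vals_def)
next
  case (snoc g gs)
  then show ?case using gate_val_V[of m x g x'] by (simp add: gate_vals_snoc)
qed

lemma lin:
  assumes "\<forall>w\<in>#M. \<forall>i. w = Var i \<longrightarrow> i < n"
    "\<forall>k<n. vb a (Var k) + vb b (Var k) = vb c (Var k) + vb d (Var k)"
  shows "(\<Sum>w\<in>#M. vb a w) + (\<Sum>w\<in>#M. vb b w) = (\<Sum>w\<in>#M. vb c w) + (\<Sum>w\<in>#M. vb d w)"
  using assms(1)
proof (induction M)
  case empty then show ?case by simp
next
  case (add w M)
  have "vb a w + vb b w = vb c w + vb d w"
    using add.prems assms(2) by (cases w) (auto simp: vb_def)
  then show ?case using add by simp
qed



lemma and_bound: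
  assumes m: "m > 0" and cc: "CC_circuit h m n \<Gamma>" and co: "computes m n \<Gamma> AND_fun"
  shows "n < m ^ length \<Gamma>"
proof (rule ccontr)
  assume "\<not> n < m ^ length \<Gamma>"
  then have big: "m ^ length \<Gamma> \<le> n" by simp
  have wfi: "\<And>i. i < length \<Gamma> \<Longrightarrow> (\<forall>w\<in>#snd (\<Gamma> ! i). (\<forall>k. w = Var k \<longrightarrow> k < n))"
    using cc by (simp add: CC_circuit_def wf_circuit_def)
  have vars: "\<forall>w\<in>#snd g. \<forall>i. w = Var i \<longrightarrow> i < n" if gi: "g \<in> set \<Gamma>" for g
  proof -
    obtain i where "i < length \<Gamma>" "g = \<Gamma> ! i" using gi by (auto simp: in_set_conv_nth)
    then show ?thesis using wfi by blast
  qed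
  define z where "z t = replicate t False @ replicate (n - t) True" for t
  define \<phi> where "\<phi> t = map (Vg m (z t)) \<Gamma>" for t
  have sub: "\<phi> ` {0..n} \<subseteq> {xs. set xs \<subseteq> {0..<m} \<and> length xs = length \<Gamma>}"
    using m by (auto simp: \<phi>_def Vg_def)
  have "card (\<phi> ` {0..n}) \<le> card {xs. set xs \<subseteq> {0..<m} \<and> length xs = length \<Gamma>}"
    by (rule card_mono[OF finite_lists_length_eq[OF finite_atLeastLessThan] sub])
  also have "\<dots> = m ^ length \<Gamma>" by (simp add: card_lists_length_eq)
  finally have "card (\<phi> ` {0..n}) < card {0..n}" using big by simp
  then have "\<not> inj_on \<phi> {0..n}" using card_image by fastforce
  then obtain t t' where tt: "t \<in> {0..n}" "t' \<in> {0..n}" "t \<noteq> t'" "\<phi> t = \<phi> t'"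
    unfolding inj_on_def by blast
  obtain t1 t2 where t12: "t1 < t2" "t2 \<le> n" "\<phi> t1 = \<phi> t2"
  proof (cases "t < t'")
    case True then show ?thesis using tt that by auto
  next
    case False then show ?thesis using tt that[of t' t] by auto
  qed
  define w where "w = replicate t1 True @ replicate (t2 - t1) False @ replicate (n - t2) True"
  define ones where "ones = replicate n True"
  have lw: "length w = n" using t12 by (simp add: w_def)
  have lo: "length ones = n" by (simp add: ones_def)
  have pw: "\<forall>k<n. vb (z t1) (Var k) + vb w (Var k) = vb (z t2) (Var k) + vb ones (Var k)"
  proof (intro allI impI)
    fix k assume "k < n"
    then show "vb (z t1) (Var k) + vb w (Var k) = vb (z t2) (Var k) + vb ones (Var k)"
      using t12 by (auto simp: vb_def z_def w_def ones_def nth_append)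
  qed
  have "Vg m w g = Vg m ones g" if g: "g \<in> set \<Gamma>" for g
  proof -
    have e: "Vg m (z t1) g = Vg m (z t2) g" using t12(3) g by (simp add: \<phi>_def)
    have "(\<Sum>w\<in>#snd g. vb (z t1) w) + (\<Sum>w'\<in>#snd g. vb w w') = (\<Sum>w\<in>#snd g. vb (z t2) w) + (\<Sum>w\<in>#snd g. vb ones w)"
      by (rule lin[OF vars[OF g] pw])
    then show ?thesis using e unfolding Vg_def by (metis modcancel)
  qed
  then have "gate_vals m w \<Gamma> = gate_vals m ones \<Gamma>" by (intro vals_V) blast
  then have "circuit_eval m \<Gamma> w = circuit_eval m \<Gamma> ones" by (simp add: circuit_eval_def)
  then have "AND_fun w = AND_fun ones" using co lw lo by (simp add: computes_def)
  moreover have "AND_fun ones" by (simp add: AND_fun_def ones_def)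
  moreover have "\<not> AND_fun w" using t12 by (auto simp: AND_fun_def w_def)
  ultimately show False by simp
qed



lemma step:
  assumes m: "m > 0" and cc: "CC_circuit h m n \<Gamma>"
    and c: "card {x. length x = n \<and> (neg \<noteq> circuit_eval m \<Gamma> x)} \<ge> 1"
    and lt: "card {x. length x = n \<and> (neg \<noteq> circuit_eval m \<Gamma> x)} * 2 ^ N < (2::nat) ^ n"
  shows "AND_computable h m (N + 1) \<and> gamma h m (N + 1) \<le> length \<Gamma>"
proof -
  define c where "c = card {x. length x = n \<and> (neg \<noteq> circuit_eval m \<Gamma> x)}"
  have "N \<le> n"
  proof (rule ccontr)
    assume "\<not> N \<le> n"
    then have "(2::nat) ^ n \<le> 2 ^ N" by simp
    also have "\<dots> \<le> c * 2 ^ N" using c c_def by simp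
    finally show False using lt c_def by simp
  qed
  then have "(2::nat) ^ n = 2 ^ (n - N) * 2 ^ N" by (simp flip: power_add)
  then have "c < 2 ^ (n - N)" using lt c_def by simp
  then have clt: "c < 2 ^ (n + 1 - (N + 1))" by simp
  have ne: "{x. length x = n \<and> (neg \<noteq> circuit_eval m \<Gamma> x)} \<noteq> {}" using c by (metis card.empty not_one_le_zero)
  obtain ls where ls: "length ls = n" "\<forall>l\<in>set ls. litok (N + 1) l"
    "\<forall>y. length y = N + 1 \<longrightarrow> (neg \<noteq> circuit_eval m \<Gamma> (map (evallit y) ls)) = AND_fun y"
    using comb[of n "\<lambda>x. neg \<noteq> circuit_eval m \<Gamma> x" "N + 1", OF ne] clt c_def by auto
  obtain G where G: "CC_circuit h m (N + 1) G" "length G = length \<Gamma>"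
    "\<forall>y. circuit_eval m G y = (neg \<noteq> circuit_eval m \<Gamma> (map (evallit y) ls))"
    using construct[OF m cc ls(1) ls(2), of neg] by blast
  have comp: "computes m (N + 1) G AND_fun" using G(3) ls(3) by (simp add: computes_def)
  have "AND_computable h m (N + 1)" using G(1) comp by (auto simp: AND_computable_def)
  moreover have "gamma h m (N + 1) \<le> length \<Gamma>"
    unfolding gamma_def using G comp by (intro Least_le) auto
  ultimately show ?thesis by simp
qed

lemma gamma_bound:
  assumes m: "m > 0" and P: "AND_computable h m n'" "gamma h m n' \<le> K"
  shows "n' \<le> m ^ K"
proof -
  obtain G0 where "CC_circuit h m n' G0 \<and> computes m n' G0 AND_fun" using P(1) by (auto simp: AND_computable_def)
  then have "\<exists>k \<Gamma>. CC_circuit h m n' \<Gamma> \<and> computes m n' \<Gamma> AND_fun \<and> length \<Gamma> = k" by blast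
  then have "\<exists>\<Gamma>. CC_circuit h m n' \<Gamma> \<and> computes m n' \<Gamma> AND_fun \<and> length \<Gamma> = gamma h m n'"
    unfolding gamma_def by (rule LeastI_ex)
  then obtain G1 where G1: "CC_circuit h m n' G1" "computes m n' G1 AND_fun" "length G1 = gamma h m n'" by blast
  have "n' < m ^ length G1" by (rule and_bound[OF m G1(1) G1(2)])
  also have "\<dots> \<le> m ^ K" using G1(3) P(2) m by (simp add: power_increasing)
  finally show ?thesis by simp
qed

theorem corollary6p2:
  fixes h m n :: nat and \<Gamma> :: circuit
  assumes "h > 0" and "m > 0"
    and "CC_circuit h m n \<Gamma>"
    and "nonconstant n (circuit_eval m \<Gamma>)"
  shows "balance n (circuit_eval m \<Gamma>) \<ge> 2 powr (1 - real (gamma_inv h m (length \<Gamma>)))"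
proof (rule ccontr)
  define f where "f = circuit_eval m \<Gamma>"
  define N where "N = gamma_inv h m (length \<Gamma>)"
  define c0 where "c0 = card {x. length x = n \<and> \<not> f x}"
  define c1 where "c1 = card {x. length x = n \<and> f x}"
  assume "\<not> ?thesis"
  then have bl: "balance n f < 2 / 2 ^ N"
    by (simp add: f_def N_def powr_diff powr_realpow)
  have notP: "\<not> (AND_computable h m (N + 1) \<and> gamma h m (N + 1) \<le> length \<Gamma>)"
  proof
    assume "AND_computable h m (N + 1) \<and> gamma h m (N + 1) \<le> length \<Gamma>"
    then have "N + 1 \<le> N" unfolding N_def gamma_inv_def
      using gamma_bound[OF assms(2)] by (intro Greatest_le_nat[where b = "m ^ length \<Gamma>"]) auto
    then show False by simp
  qed
  have sum: "c0 + c1 = 2 ^ n"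
  proof -
    have "{x::bool list. length x = n} = {x. length x = n \<and> \<not> f x} \<union> {x. length x = n \<and> f x}" by auto
    then have "card {x::bool list. length x = n} = c0 + c1" unfolding c0_def c1_def
      by (simp add: card_Un_disjoint fin_lenP disjoint_iff)
    then show ?thesis using card_len by simp
  qed
  obtain x y where xy: "length x = n" "length y = n" "f x \<noteq> f y"
    using assms(4) by (auto simp: nonconstant_def f_def)
  have c0p: "c0 \<ge> 1" and c1p: "c1 \<ge> 1"
  proof -
    have "{x. length x = n \<and> \<not> f x} \<noteq> {}" "{x. length x = n \<and> f x} \<noteq> {}" using xy by auto
    then have "card {x. length x = n \<and> \<not> f x} > 0" "card {x. length x = n \<and> f x} > 0"
      by (simp_all add: card_gt_0_iff fin_lenP)
    then show "c0 \<ge> 1" "c1 \<ge> 1" unfolding c0_def c1_def by simp_all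
  qed
  have bal: "balance n f = 1 - \<bar>real c0 - real c1\<bar> / 2 ^ n"
    by (simp add: balance_def c0_def c1_def)
  have "real (c0 + c1) = real (2 ^ n)" using sum by simp
  then have sumr: "real c0 + real c1 = 2 ^ n" by simp
  show False
  proof (cases "c1 \<le> c0")
    case True
    then have "balance n f = 2 * real c1 / 2 ^ n" using bal sumr by (simp add: field_simps)
    then have "2 * real c1 / 2 ^ n < 2 / 2 ^ N" using bl by simp
    then have "real c1 * 2 ^ N < 2 ^ n" by (simp add: field_simps)
    then have "real (c1 * 2 ^ N) < real (2 ^ n)" by simp
    then have lt: "c1 * 2 ^ N < 2 ^ n" by (simp only: of_nat_less_iff)
    have "card {x. length x = n \<and> (False \<noteq> circuit_eval m \<Gamma> x)} = c1" by (simp add: c1_def f_def)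
    then show False using step[OF assms(2,3), of False N] lt c1p notP by simp
  next
    case False
    then have "balance n f = 2 * real c0 / 2 ^ n" using bal sumr by (simp add: field_simps)
    then have "2 * real c0 / 2 ^ n < 2 / 2 ^ N" using bl by simp
    then have "real c0 * 2 ^ N < 2 ^ n" by (simp add: field_simps)
    then have "real (c0 * 2 ^ N) < real (2 ^ n)" by simp
    then have lt: "c0 * 2 ^ N < 2 ^ n" by (simp only: of_nat_less_iff)
    have "card {x. length x = n \<and> (True \<noteq> circuit_eval m \<Gamma> x)} = c0" by (simp add: c0_def f_def)
    then show False using step[OF assms(2,3), of True N] lt c0p notP by simp
  qed
qed

end
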